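(* For all integers $s,t \ge 3$, every doubly saturated $R(s,t)$-good graph has at least $2s+2t-7$ vertices. Equivalently, $\mathsf{DS}(s,t) \ge 2s+2t-7$, where $\mathsf{DS}(s,t) := \inf\{n \mid \text{there is a doubly saturated } R(s,t)\text{-good graph on } n \text{ vertices}\}$ (with $\inf \emptyset = \infty$).
   Context: All graphs are finite and simple. A graph $G$ is \emph{$R(s,t)$-good} if it contains no clique of size $s$ and no independent set of size $t$. A graph $G$ is \emph{doubly saturated $R(s,t)$-good} if (i) $G$ is $R(s,t)$-good; (ii) for every pair of non-adjacent distinct vertices $u,v$, the graph $G + uv$ is not $R(s,t)$-good; (iii) for every edge $uv$ of $G$, the graph $G - uv$ is not $R(s,t)$-good; and (iv) $G$ is neither a complete graph nor an edgeless graph. *)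

theory Defs
  imports Main
begin

definition simple_graph :: "'a set \<Rightarrow> ('a \<Rightarrow> 'a \<Rightarrow> bool) \<Rightarrow> bool" where
  "simple_graph V E \<longleftrightarrow> finite V \<and> (\<forall>u v. E u v \<longrightarrow> u \<in> V \<and> v \<in> V)
     \<and> (\<forall>u v. E u v \<longrightarrow> E v u) \<and> (\<forall>v. \<not> E v v)"

definition is_clique :: "'a set \<Rightarrow> ('a \<Rightarrow> 'a \<Rightarrow> bool) \<Rightarrow> 'a set \<Rightarrow> bool" where
  "is_clique V E K \<longleftrightarrow> K \<subseteq> V \<and> (\<forall>u\<in>K. \<forall>v\<in>K. u \<noteq> v \<longrightarrow> E u v)"

definition is_indep :: "'a set \<Rightarrow> ('a \<Rightarrow> 'a \<Rightarrow> bool) \<Rightarrow> 'a set \<Rightarrow> bool" where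
  "is_indep V E I \<longleftrightarrow> I \<subseteq> V \<and> (\<forall>u\<in>I. \<forall>v\<in>I. \<not> E u v)"

definition ramsey_good :: "nat \<Rightarrow> nat \<Rightarrow> 'a set \<Rightarrow> ('a \<Rightarrow> 'a \<Rightarrow> bool) \<Rightarrow> bool" where
  "ramsey_good s t V E \<longleftrightarrow>
     \<not> (\<exists>K. is_clique V E K \<and> card K = s) \<and> \<not> (\<exists>I. is_indep V E I \<and> card I = t)"

definition add_edge :: "('a \<Rightarrow> 'a \<Rightarrow> bool) \<Rightarrow> 'a \<Rightarrow> 'a \<Rightarrow> ('a \<Rightarrow> 'a \<Rightarrow> bool)" where
  "add_edge E u v = (\<lambda>x y. E x y \<or> (x = u \<and> y = v) \<or> (x = v \<and> y = u))"

definition del_edge :: "('a \<Rightarrow> 'a \<Rightarrow> bool) \<Rightarrow> 'a \<Rightarrow> 'a \<Rightarrow> ('a \<Rightarrow> 'a \<Rightarrow> bool)" where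
  "del_edge E u v = (\<lambda>x y. E x y \<and> \<not> (x = u \<and> y = v) \<and> \<not> (x = v \<and> y = u))"

definition doubly_saturated :: "nat \<Rightarrow> nat \<Rightarrow> 'a set \<Rightarrow> ('a \<Rightarrow> 'a \<Rightarrow> bool) \<Rightarrow> bool" where
  "doubly_saturated s t V E \<longleftrightarrow>
     ramsey_good s t V E
     \<and> (\<forall>u\<in>V. \<forall>v\<in>V. u \<noteq> v \<and> \<not> E u v \<longrightarrow> \<not> ramsey_good s t V (add_edge E u v))
     \<and> (\<forall>u v. E u v \<longrightarrow> \<not> ramsey_good s t V (del_edge E u v))
     \<and> \<not> (\<forall>u\<in>V. \<forall>v\<in>V. u \<noteq> v \<longrightarrow> E u v)
     \<and> \<not> (\<forall>u v. \<not> E u v)"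

end

theory Submission
  imports Defs
begin

definition cl :: "('a \<Rightarrow> 'a \<Rightarrow> bool) \<Rightarrow> 'a set \<Rightarrow> bool" where
  "cl R X \<longleftrightarrow> (\<forall>u\<in>X. \<forall>v\<in>X. u \<noteq> v \<longrightarrow> R u v)"

lemma hajnal:
  assumes S: "finite S" and bnd: "\<And>X. X \<subseteq> S \<Longrightarrow> cl R X \<Longrightarrow> card X \<le> r"
  shows "finite F \<Longrightarrow> F \<noteq> {} \<Longrightarrow> (\<forall>C\<in>F. C \<subseteq> S \<and> cl R C \<and> card C = r)
     \<Longrightarrow> 2*r \<le> card (\<Union>F) + card (\<Inter>F)"
proof (induction F rule: finite_ne_induct)
  case (singleton C)
  then show ?case by simp
next
  case (insert C F)
  define U where "U = \<Union>F"
  define I where "I = \<Inter>F"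
  have IH: "2*r \<le> card U + card I" using insert unfolding U_def I_def by simp
  have CS: "C \<subseteq> S" "cl R C" "card C = r" using insert.prems by auto
  have US: "U \<subseteq> S" using insert.prems unfolding U_def by auto
  have IU: "I \<subseteq> U" using insert.hyps(2) unfolding U_def I_def by auto
  have fU: "finite U" using US S finite_subset by blast
  have fC: "finite C" using CS S finite_subset by blast
  have fI: "finite I" using IU fU finite_subset by blast
  have clq: "cl R (I \<union> (C \<inter> U))"
    unfolding cl_def
  proof (intro ballI impI)
    fix x y assume x: "x \<in> I \<union> (C \<inter> U)" and y: "y \<in> I \<union> (C \<inter> U)" and xy: "x \<noteq> y"
    show "R x y"
    proof (cases "x \<in> I")
      case True
      then show ?thesis
      proof (cases "y \<in> I")
        case True
        obtain D where "D \<in> F" using insert.hyps(2) by blast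
        then show ?thesis using \<open>x \<in> I\<close> True xy insert.prems unfolding I_def cl_def by auto
      next
        case False
        then have "y \<in> U" using y by auto
        then obtain D where "D \<in> F" "y \<in> D" unfolding U_def by auto
        then show ?thesis using \<open>x \<in> I\<close> xy insert.prems unfolding I_def cl_def by auto
      qed
    next
      case False
      then have xC: "x \<in> C" "x \<in> U" using x by auto
      show ?thesis
      proof (cases "y \<in> I")
        case True
        obtain D where "D \<in> F" "x \<in> D" using xC unfolding U_def by auto
        then show ?thesis using True xy insert.prems unfolding I_def cl_def by auto
      next
        case False
        then have "y \<in> C" using y by auto
        then show ?thesis using xC CS xy unfolding cl_def by auto
      qed
    qed
  qed
  have "card (I \<union> (C \<inter> U)) \<le> r"
    using bnd[OF _ clq] IU US CS by blast
  moreover have "card (I \<union> (C \<inter> U)) + card (C \<inter> I) = card I + card (C \<inter> U)"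
  proof -
    have "I \<inter> (C \<inter> U) = C \<inter> I" using IU by auto
    then show ?thesis using card_Un_Int[of I "C \<inter> U"] fI fC by simp
  qed
  moreover have "card (C \<union> U) + card (C \<inter> U) = card C + card U"
    using card_Un_Int[of C U] fC fU by simp
  ultimately have "2*r \<le> card (C \<union> U) + card (C \<inter> I)" using IH CS by linarith
  then show ?case unfolding U_def I_def by simp
qed

lemma side:
  assumes fA: "finite A" and ne: "A \<noteq> {}"
    and bnd: "\<And>X. X \<subseteq> A \<Longrightarrow> cl R X \<Longrightarrow> card X \<le> r"
    and av: "\<And>a. a \<in> A \<Longrightarrow> \<exists>K. K \<subseteq> A \<and> cl R K \<and> card K = r \<and> a \<notin> K"
  shows "2 * r \<le> card A"
proof -
  define F where "F = {K. K \<subseteq> A \<and> cl R K \<and> card K = r}"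
  have "F \<subseteq> Pow A" unfolding F_def by blast
  then have fF: "finite F" using fA by (meson finite_Pow_iff finite_subset)
  obtain a where "a \<in> A" using ne by blast
  then have neF: "F \<noteq> {}" using av unfolding F_def by blast
  have "\<Inter>F = {}"
  proof (rule ccontr)
    assume "\<Inter>F \<noteq> {}"
    then obtain b where b: "b \<in> \<Inter>F" by blast
    obtain K where "K \<in> F" using neF by blast
    then have "b \<in> A" using b unfolding F_def by auto
    then obtain K' where "K' \<in> F" "b \<notin> K'" using av unfolding F_def by blast
    then show False using b by blast
  qed
  moreover have UA: "\<Union>F \<subseteq> A" unfolding F_def by auto
  moreover have "\<forall>C\<in>F. C \<subseteq> A \<and> cl R C \<and> card C = r" unfolding F_def by blast
  then have "2*r \<le> card (\<Union>F) + card (\<Inter>F)"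
    using hajnal[OF fA bnd fF neF] by blast
  moreover have "card (\<Union>F) \<le> card A" using UA fA by (rule card_mono[rotated])
  ultimately show ?thesis by simp
qed

lemma L_del:
  assumes sg: "simple_graph V E" and ds: "doubly_saturated s t V E" and e: "E a b"
  shows "\<exists>J. J \<subseteq> V - {a,b} \<and> card J = t - 2 \<and> (\<forall>x\<in>J. \<not> E a x \<and> \<not> E b x)
            \<and> (\<forall>x\<in>J. \<forall>y\<in>J. \<not> E x y)"
proof -
  have good: "ramsey_good s t V E" using ds unfolding doubly_saturated_def by blast
  have nd: "\<not> ramsey_good s t V (del_edge E a b)" using ds e unfolding doubly_saturated_def by blast
  have ab: "a \<noteq> b" "a \<in> V" "b \<in> V" using sg e unfolding simple_graph_def by metis+
  show ?thesis
  proof (cases "\<exists>K. is_clique V (del_edge E a b) K \<and> card K = s")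
    case True
    then obtain K where "is_clique V (del_edge E a b) K" "card K = s" by blast
    then have "is_clique V E K" unfolding is_clique_def del_edge_def by auto
    then show ?thesis using good \<open>card K = s\<close> unfolding ramsey_good_def by blast
  next
    case False
    then obtain I where I: "is_indep V (del_edge E a b) I" "card I = t"
      using nd unfolding ramsey_good_def by blast
    have abI: "a \<in> I \<and> b \<in> I"
    proof (rule ccontr)
      assume "\<not> (a \<in> I \<and> b \<in> I)"
      then have "is_indep V E I" using I(1) unfolding is_indep_def del_edge_def by auto
      then show False using good I(2) unfolding ramsey_good_def by blast
    qed
    have fI: "finite I" using I sg unfolding is_indep_def simple_graph_def
      using finite_subset by blast
    define J where "J = I - {a,b}"
    have "card J = t - 2" unfolding J_def using abI ab fI I(2)
      by (simp add: card_Diff_subset)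
    moreover have "J \<subseteq> V - {a,b}" using I(1) unfolding J_def is_indep_def by auto
    moreover have "\<forall>x\<in>J. \<not> E a x \<and> \<not> E b x"
      using I(1) abI unfolding J_def is_indep_def del_edge_def by auto
    moreover have "\<forall>x\<in>J. \<forall>y\<in>J. \<not> E x y"
      using I(1) unfolding J_def is_indep_def del_edge_def by auto
    ultimately show ?thesis by blast
  qed
qed

lemma L_add:
  assumes sg: "simple_graph V E" and ds: "doubly_saturated s t V E"
    and ab: "a \<in> V" "b \<in> V" "a \<noteq> b" "\<not> E a b"
  shows "\<exists>K. K \<subseteq> V - {a,b} \<and> card K = s - 2 \<and> (\<forall>x\<in>K. E a x \<and> E b x)
            \<and> (\<forall>x\<in>K. \<forall>y\<in>K. x \<noteq> y \<longrightarrow> E x y)"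
proof -
  have good: "ramsey_good s t V E" using ds unfolding doubly_saturated_def by blast
  have nd: "\<not> ramsey_good s t V (add_edge E a b)" using ds ab unfolding doubly_saturated_def by blast
  have sym: "\<And>x y. E x y \<Longrightarrow> E y x" using sg unfolding simple_graph_def by blast
  show ?thesis
  proof (cases "\<exists>I. is_indep V (add_edge E a b) I \<and> card I = t")
    case True
    then obtain I where "is_indep V (add_edge E a b) I" "card I = t" by blast
    then have "is_indep V E I" unfolding is_indep_def add_edge_def by auto
    then show ?thesis using good \<open>card I = t\<close> unfolding ramsey_good_def by blast
  next
    case False
    then obtain K where K: "is_clique V (add_edge E a b) K" "card K = s"
      using nd unfolding ramsey_good_def by blast
    have abK: "a \<in> K \<and> b \<in> K"
    proof (rule ccontr)
      assume "\<not> (a \<in> K \<and> b \<in> K)"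
      then have "is_clique V E K" using K(1) unfolding is_clique_def add_edge_def by auto
      then show False using good K(2) unfolding ramsey_good_def by blast
    qed
    have fK: "finite K" using K sg unfolding is_clique_def simple_graph_def
      using finite_subset by blast
    define J where "J = K - {a,b}"
    have "card J = s - 2" unfolding J_def using abK ab fK K(2)
      by (simp add: card_Diff_subset)
    moreover have "J \<subseteq> V - {a,b}" using K(1) unfolding J_def is_clique_def by auto
    moreover have "\<forall>x\<in>J. E a x \<and> E b x"
      using K(1) abK ab unfolding J_def is_clique_def add_edge_def by auto
    moreover have "\<forall>x\<in>J. \<forall>y\<in>J. x \<noteq> y \<longrightarrow> E x y"
      using K(1) unfolding J_def is_clique_def add_edge_def by auto
    ultimately show ?thesis by blast
  qed
qed

theorem mainTheorem4:
  fixes V :: "'a set" and E :: "'a \<Rightarrow> 'a \<Rightarrow> bool" and s t :: nat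
  assumes "s \<ge> 3" and "t \<ge> 3"
    and "simple_graph V E"
    and "doubly_saturated s t V E"
  shows "card V \<ge> 2 * s + 2 * t - 7"
proof -
  note sg = assms(3) and ds = assms(4)
  have fV: "finite V" using sg unfolding simple_graph_def by blast
  have sym: "\<And>x y. E x y \<Longrightarrow> E y x" using sg unfolding simple_graph_def by blast
  have inV: "\<And>x y. E x y \<Longrightarrow> x \<in> V \<and> y \<in> V" using sg unfolding simple_graph_def by blast
  have irr: "\<And>x. \<not> E x x" using sg unfolding simple_graph_def by blast
  have good: "ramsey_good s t V E" using ds unfolding doubly_saturated_def by blast
  have nc: "\<not> (\<forall>u\<in>V. \<forall>v\<in>V. u \<noteq> v \<longrightarrow> E u v)" and ne: "\<not> (\<forall>u v. \<not> E u v)"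
    using ds unfolding doubly_saturated_def by (simp_all only: simp_thms)
  obtain p q where pq: "p \<in> V" "q \<in> V" "p \<noteq> q" "\<not> E p q"
    using nc by blast
  obtain a0 b0 where ab0: "E a0 b0" using ne by blast
  obtain w u x where w: "w \<in> V" "E w u" "x \<in> V" "x \<noteq> w" "\<not> E w x"
  proof (cases "\<exists>u. E p u")
    case True
    then obtain u where "E p u" by blast
    then show ?thesis using that[of p u q] pq by simp
  next
    case False
    then have "a0 \<noteq> p" "\<not> E a0 p" using ab0 sym by blast+
    moreover have "a0 \<in> V" using inV ab0 by blast
    ultimately show ?thesis using that[of a0 b0 p] pq ab0 by simp
  qed
  define A where "A = {v. E w v}"
  define B where "B = {v \<in> V. v \<noteq> w \<and> \<not> E w v}"
  have AV: "A \<subseteq> V" unfolding A_def using inV by blast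
  have BV: "B \<subseteq> V" unfolding B_def by blast
  have fA: "finite A" using AV fV by (rule finite_subset)
  have fB: "finite B" using BV fV by (rule finite_subset)
  have cA: "2 * (s - 2) \<le> card A"
  proof (rule side[OF fA, where R = E])
    show "A \<noteq> {}" using w unfolding A_def by blast
  next
    fix X assume X: "X \<subseteq> A" "cl E X"
    show "card X \<le> s - 2"
    proof (rule ccontr)
      assume "\<not> card X \<le> s - 2"
      then have "s - 1 \<le> card X" by simp
      then obtain Y where Y: "Y \<subseteq> X" "card Y = s - 1"
        using obtain_subset_with_card_n by metis
      have wY: "w \<notin> Y" using Y X irr unfolding A_def by blast
      have fY: "finite Y" using _ fA by (rule finite_subset) (use Y X in blast)
      have "card (insert w Y) = s" using wY fY Y assms(1) by simp
      moreover have "is_clique V E (insert w Y)"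
        unfolding is_clique_def
      proof (intro conjI ballI impI)
        show "insert w Y \<subseteq> V" using Y(1) X(1) AV w(1) by blast
      next
        fix x z assume xz: "x \<in> insert w Y" "z \<in> insert w Y" "x \<noteq> z"
        have YA: "\<And>y. y \<in> Y \<Longrightarrow> E w y" using Y(1) X(1) unfolding A_def by blast
        have YY: "\<And>y y'. y \<in> Y \<Longrightarrow> y' \<in> Y \<Longrightarrow> y \<noteq> y' \<Longrightarrow> E y y'"
          using Y(1) X(2) unfolding cl_def by blast
        show "E x z" using xz YA YY sym by auto
      qed
      ultimately show False using good unfolding ramsey_good_def by blast
    qed
  next
    fix a assume a: "a \<in> A"
    have "E w a" using a unfolding A_def by blast
    obtain J where J: "J \<subseteq> V - {w,a}" "card J = t - 2" "\<forall>x\<in>J. \<not> E w x \<and> \<not> E a x"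
      using L_del[OF sg ds \<open>E w a\<close>] by blast
    then have "J \<noteq> {}" using assms(2) by auto
    then obtain y where y: "y \<in> J" by blast
    then have "y \<in> V" "w \<noteq> y" "\<not> E w y" "\<not> E a y" using J by auto
    then obtain K where K: "K \<subseteq> V - {w,y}" "card K = s - 2" "\<forall>x\<in>K. E w x \<and> E y x"
      "\<forall>x\<in>K. \<forall>z\<in>K. x \<noteq> z \<longrightarrow> E x z"
      using L_add[OF sg ds w(1) \<open>y \<in> V\<close> \<open>w \<noteq> y\<close> \<open>\<not> E w y\<close>] by blast
    have "a \<notin> K" using K(3) \<open>\<not> E a y\<close> sym by blast
    moreover have "K \<subseteq> A" using K(3) unfolding A_def by blast
    moreover have "cl E K" using K(4) unfolding cl_def by blast
    ultimately show "\<exists>K. K \<subseteq> A \<and> cl E K \<and> card K = s - 2 \<and> a \<notin> K" using K(2) by blast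
  qed
  have cB: "2 * (t - 2) \<le> card B"
  proof (rule side[OF fB, where R = "\<lambda>x y. \<not> E x y"])
    show "B \<noteq> {}" using w unfolding B_def by blast
  next
    fix X assume X: "X \<subseteq> B" "cl (\<lambda>x y. \<not> E x y) X"
    show "card X \<le> t - 2"
    proof (rule ccontr)
      assume "\<not> card X \<le> t - 2"
      then have "t - 1 \<le> card X" by simp
      then obtain Y where Y: "Y \<subseteq> X" "card Y = t - 1"
        using obtain_subset_with_card_n by metis
      have wY: "w \<notin> Y" using Y X unfolding B_def by blast
      have fY: "finite Y" using _ fB by (rule finite_subset) (use Y X in blast)
      have "card (insert w Y) = t" using wY fY Y assms(2) by simp
      moreover have "is_indep V E (insert w Y)"
        unfolding is_indep_def
      proof (intro conjI ballI)
        show "insert w Y \<subseteq> V" using Y(1) X(1) BV w(1) by blast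
      next
        fix x z assume xz: "x \<in> insert w Y" "z \<in> insert w Y"
        have YA: "\<And>y. y \<in> Y \<Longrightarrow> \<not> E w y" using Y(1) X(1) unfolding B_def by blast
        have YY: "\<And>y y'. y \<in> Y \<Longrightarrow> y' \<in> Y \<Longrightarrow> y \<noteq> y' \<Longrightarrow> \<not> E y y'"
          using Y(1) X(2) unfolding cl_def by blast
        show "\<not> E x z"
        proof (cases "x = w")
          case True
          then show ?thesis using xz(2) YA irr by auto
        next
          case False
          then have "x \<in> Y" using xz(1) by simp
          show ?thesis
          proof (cases "z = w")
            case True
            then show ?thesis using \<open>x \<in> Y\<close> YA sym by blast
          next
            case False
            then have "z \<in> Y" using xz(2) by simp
            then show ?thesis using \<open>x \<in> Y\<close> YY irr by (cases "x = z") auto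
          qed
        qed
      qed
      ultimately show False using good unfolding ramsey_good_def by blast
    qed
  next
    fix a assume a: "a \<in> B"
    then have "a \<in> V" "w \<noteq> a" "\<not> E w a" unfolding B_def by auto
    then obtain K where K: "K \<subseteq> V - {w,a}" "card K = s - 2" "\<forall>x\<in>K. E w x \<and> E a x"
      using L_add[OF sg ds w(1) \<open>a \<in> V\<close> \<open>w \<noteq> a\<close> \<open>\<not> E w a\<close>] by blast
    then have "K \<noteq> {}" using assms(1) by auto
    then obtain k where k: "k \<in> K" by blast
    then have "E w k" "E a k" using K by auto
    then obtain J where J: "J \<subseteq> V - {w,k}" "card J = t - 2" "\<forall>x\<in>J. \<not> E w x \<and> \<not> E k x"
      "\<forall>x\<in>J. \<forall>y\<in>J. \<not> E x y"
      using L_del[OF sg ds \<open>E w k\<close>] by blast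
    have "a \<notin> J" using J(3) \<open>E a k\<close> sym by blast
    moreover have "J \<subseteq> B" using J(1,3) unfolding B_def by blast
    moreover have "cl (\<lambda>x y. \<not> E x y) J" using J(4) unfolding cl_def by blast
    ultimately show "\<exists>K. K \<subseteq> B \<and> cl (\<lambda>x y. \<not> E x y) K \<and> card K = t - 2 \<and> a \<notin> K"
      using J(2) by blast
  qed
  have disj: "A \<inter> B = {}" "w \<notin> A" "w \<notin> B" unfolding A_def B_def using irr by auto
  have "insert w (A \<union> B) \<subseteq> V" using AV BV w(1) by blast
  then have "card (insert w (A \<union> B)) \<le> card V" using fV by (rule card_mono[rotated])
  moreover have "card (insert w (A \<union> B)) = 1 + card A + card B"
    using disj fA fB by (simp add: card_Un_disjoint)
  ultimately show ?thesis using cA cB assms(1,2) by linarith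
qed

end
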